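(* Let $w,x,y,z$ be nodes of a median graph, and let $B=\big((I_{yw}\cap I_{xw})\cup(I_{yw}\cap I_{zw})\big)\setminus\{w\}$. If $B\neq\emptyset$, then a point of $B$ closest to $y$ is whichever of $m(y,x,w)$ and $m(y,z,w)$ is closer to $y$.
   Context: $G$ is a finite connected unweighted undirected median graph: with shortest-path distance $d$ and $I_{ab}=\{v:d(a,v)+d(v,b)=d(a,b)\}$, $\lvert I_{ab}\cap I_{ac}\cap I_{bc}\rvert=1$ for all nodes $a,b,c$, and $m(a,b,c)$ denotes that unique node. (In the paper, $B$ is the set of bargaining points of $y$ when the current winner is $w$ and the other group members are $x,z$.) *)

theory Defs
  imports Main
begin

inductive walk_len :: "('a \<Rightarrow> 'a \<Rightarrow> bool) \<Rightarrow> 'a \<Rightarrow> 'a \<Rightarrow> nat \<Rightarrow> bool"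
  for E :: "'a \<Rightarrow> 'a \<Rightarrow> bool" where
  walk_refl: "walk_len E u u 0"
| walk_step: "E u v \<Longrightarrow> walk_len E v w n \<Longrightarrow> walk_len E u w (Suc n)"

definition gdist :: "('a \<Rightarrow> 'a \<Rightarrow> bool) \<Rightarrow> 'a \<Rightarrow> 'a \<Rightarrow> nat" where
  "gdist E u v = (LEAST n. walk_len E u v n)"

definition interval :: "'a set \<Rightarrow> ('a \<Rightarrow> 'a \<Rightarrow> bool) \<Rightarrow> 'a \<Rightarrow> 'a \<Rightarrow> 'a set" where
  "interval V E a b = {v \<in> V. gdist E a v + gdist E v b = gdist E a b}"

definition connected_graph :: "'a set \<Rightarrow> ('a \<Rightarrow> 'a \<Rightarrow> bool) \<Rightarrow> bool" where
  "connected_graph V E \<longleftrightarrow>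
     finite V \<and> V \<noteq> {} \<and>
     (\<forall>u v. E u v \<longrightarrow> u \<in> V \<and> v \<in> V) \<and>
     (\<forall>u v. E u v \<longrightarrow> E v u) \<and>
     (\<forall>u. \<not> E u u) \<and>
     (\<forall>u\<in>V. \<forall>v\<in>V. \<exists>n. walk_len E u v n)"

definition median_graph :: "'a set \<Rightarrow> ('a \<Rightarrow> 'a \<Rightarrow> bool) \<Rightarrow> bool" where
  "median_graph V E \<longleftrightarrow> connected_graph V E \<and>
     (\<forall>a\<in>V. \<forall>b\<in>V. \<forall>c\<in>V.
        card (interval V E a b \<inter> interval V E a c \<inter> interval V E b c) = 1)"

definition med :: "'a set \<Rightarrow> ('a \<Rightarrow> 'a \<Rightarrow> bool) \<Rightarrow> 'a \<Rightarrow> 'a \<Rightarrow> 'a \<Rightarrow> 'a" where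
  "med V E a b c = (THE v. v \<in> interval V E a b \<inter> interval V E a c \<inter> interval V E b c)"

end

theory Submission
  imports Defs
begin

lemma walk_trans: "walk_len E u v n \<Longrightarrow> walk_len E v w m \<Longrightarrow> walk_len E u w (n+m)"
  by (induction rule: walk_len.induct) (auto intro: walk_len.intros)

lemma walk_snoc: "walk_len E u v n \<Longrightarrow> E v w \<Longrightarrow> walk_len E u w (Suc n)"
  using walk_trans[of E u v n w 1] by (auto intro: walk_len.intros)

lemma walk_rev: "(\<forall>a b. E a b \<longrightarrow> E b a) \<Longrightarrow> walk_len E u v n \<Longrightarrow> walk_len E v u n"
proof -
  assume s: "\<forall>a b. E a b \<longrightarrow> E b a"
  show "walk_len E u v n \<Longrightarrow> walk_len E v u n"
    by (induction rule: walk_len.induct) (auto intro: walk_len.intros walk_snoc simp: s)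
qed

lemma gdist_walk: "walk_len E u v n \<Longrightarrow> walk_len E u v (gdist E u v) \<and> gdist E u v \<le> n"
  unfolding gdist_def by (metis LeastI Least_le)

lemma cg_walk: "connected_graph V E \<Longrightarrow> u \<in> V \<Longrightarrow> v \<in> V \<Longrightarrow> walk_len E u v (gdist E u v)"
  unfolding connected_graph_def by (meson gdist_walk)

lemma cg_tri: "connected_graph V E \<Longrightarrow> u \<in> V \<Longrightarrow> v \<in> V \<Longrightarrow> w \<in> V \<Longrightarrow>
   gdist E u w \<le> gdist E u v + gdist E v w"
  by (meson cg_walk gdist_walk walk_trans)

lemma cg_sym: "connected_graph V E \<Longrightarrow> u \<in> V \<Longrightarrow> v \<in> V \<Longrightarrow> gdist E u v = gdist E v u"
proof -
  assume c: "connected_graph V E" "u \<in> V" "v \<in> V"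
  have s: "\<forall>a b. E a b \<longrightarrow> E b a" using c(1) unfolding connected_graph_def by blast
  have "gdist E v u \<le> gdist E u v" using walk_rev[OF s cg_walk[OF c]] gdist_walk by metis
  moreover have "gdist E u v \<le> gdist E v u" using walk_rev[OF s cg_walk[OF c(1,3,2)]] gdist_walk by metis
  ultimately show ?thesis by simp
qed

lemma cg_zero: "connected_graph V E \<Longrightarrow> u \<in> V \<Longrightarrow> v \<in> V \<Longrightarrow> gdist E u v = 0 \<Longrightarrow> u = v"
  using cg_walk[of V E u v] by (auto elim: walk_len.cases)

lemma gdist_self: "gdist E u u = 0"
  using gdist_walk[OF walk_refl[of E u]] by simp

lemma med_prop:
  assumes "median_graph V E" "a \<in> V" "b \<in> V" "c \<in> V"
  shows "med V E a b c \<in> interval V E a b \<inter> interval V E a c \<inter> interval V E b c \<and>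
    (\<forall>p \<in> interval V E a b \<inter> interval V E a c \<inter> interval V E b c. p = med V E a b c)"
proof -
  have "card (interval V E a b \<inter> interval V E a c \<inter> interval V E b c) = 1"
    using assms unfolding median_graph_def by blast
  then obtain m where m: "interval V E a b \<inter> interval V E a c \<inter> interval V E b c = {m}"
    by (meson card_1_singletonE)
  hence "med V E a b c = m" unfolding med_def by auto
  thus ?thesis using m by auto
qed

lemma key:
  assumes mg: "median_graph V E" and V: "y \<in> V" "x \<in> V" "w \<in> V"
    and b: "b \<in> interval V E y w" "b \<in> interval V E x w"
  shows "gdist E w (med V E y x w) = gdist E w b + gdist E b (med V E y x w)
     \<and> gdist E y (med V E y x w) \<le> gdist E y b"
proof -
  have cg: "connected_graph V E" using mg unfolding median_graph_def by blast
  have bV: "b \<in> V" using b unfolding interval_def by blast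
  define p where "p = med V E b x y"
  have pp: "p \<in> interval V E b x \<inter> interval V E b y \<inter> interval V E x y"
    unfolding p_def using med_prop[OF mg bV V(2) V(1)] by blast
  have pV: "p \<in> V" using pp unfolding interval_def by blast
  note d = interval_def
  have e1: "gdist E y b + gdist E b w = gdist E y w" using b unfolding interval_def by blast
  have e2: "gdist E x b + gdist E b w = gdist E x w" using b unfolding interval_def by blast
  have e3: "gdist E b p + gdist E p x = gdist E b x" using pp unfolding interval_def by blast
  have e4: "gdist E b p + gdist E p y = gdist E b y" using pp unfolding interval_def by blast
  have e5: "gdist E x p + gdist E p y = gdist E x y" using pp unfolding interval_def by blast
  have s1: "gdist E b y = gdist E y b" using cg_sym[OF cg bV V(1)] .
  have s2: "gdist E b x = gdist E x b" using cg_sym[OF cg bV V(2)] .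
  have s3: "gdist E p y = gdist E y p" using cg_sym[OF cg pV V(1)] .
  have s4: "gdist E p x = gdist E x p" using cg_sym[OF cg pV V(2)] .
  have s5: "gdist E x y = gdist E y x" using cg_sym[OF cg V(2) V(1)] .
  have s6: "gdist E b p = gdist E p b" using cg_sym[OF cg bV pV] .
  have t1: "gdist E p w \<le> gdist E p b + gdist E b w" using cg_tri[OF cg pV bV V(3)] .
  have t2: "gdist E y w \<le> gdist E y p + gdist E p w" using cg_tri[OF cg V(1) pV V(3)] .
  have t3: "gdist E x w \<le> gdist E x p + gdist E p w" using cg_tri[OF cg V(2) pV V(3)] .
  have pw: "gdist E p w = gdist E p b + gdist E b w" using e1 e4 s1 s3 s6 t1 t2 by linarith
  have i1: "p \<in> interval V E y x"
  proof -
    have "gdist E y p + gdist E p x = gdist E y x" using e5 s3 s4 s5 by linarith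
    thus ?thesis unfolding interval_def using pV by blast
  qed
  have i2: "p \<in> interval V E y w"
  proof -
    have "gdist E y p + gdist E p w = gdist E y w" using pw e1 e4 s1 s3 s6 by linarith
    thus ?thesis unfolding interval_def using pV by blast
  qed
  have i3: "p \<in> interval V E x w"
  proof -
    have "gdist E x p + gdist E p w = gdist E x w" using pw e2 e3 s2 s4 s6 by linarith
    thus ?thesis unfolding interval_def using pV by blast
  qed
  have pm: "p = med V E y x w" using med_prop[OF mg V] i1 i2 i3 by blast
  have s7: "gdist E w p = gdist E p w" using cg_sym[OF cg V(3) pV] .
  have s8: "gdist E w b = gdist E b w" using cg_sym[OF cg V(3) bV] .
  have "gdist E w p = gdist E w b + gdist E b p" using pw s6 s7 s8 by linarith
  moreover have "gdist E y p \<le> gdist E y b" using e1 e4 s1 s3 by linarith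
  ultimately show ?thesis using pm by simp
qed

theorem lemmaI2:
  fixes V :: "'a set" and E :: "'a \<Rightarrow> 'a \<Rightarrow> bool" and w x y z :: 'a
  assumes "median_graph V E"
    and "w \<in> V" "x \<in> V" "y \<in> V" "z \<in> V"
    and "B = ((interval V E y w \<inter> interval V E x w) \<union>
              (interval V E y w \<inter> interval V E z w)) - {w}"
    and "B \<noteq> {}"
  shows "\<forall>r \<in> {med V E y x w, med V E y z w}.
           gdist E y r \<le> gdist E y (med V E y x w) \<and>
           gdist E y r \<le> gdist E y (med V E y z w) \<longrightarrow>
           r \<in> B \<and> (\<forall>b\<in>B. gdist E y r \<le> gdist E y b)"
proof (intro ballI impI)
  fix r
  assume r: "r \<in> {med V E y x w, med V E y z w}"
    and rm: "gdist E y r \<le> gdist E y (med V E y x w) \<and> gdist E y r \<le> gdist E y (med V E y z w)"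
  have cg: "connected_graph V E" using assms(1) unfolding median_graph_def by blast
  have m1: "med V E y x w \<in> interval V E y w \<inter> interval V E x w"
    using med_prop[OF assms(1) assms(4) assms(3) assms(2)] by blast
  have m2: "med V E y z w \<in> interval V E y w \<inter> interval V E z w"
    using med_prop[OF assms(1) assms(4) assms(5) assms(2)] by blast
  have gen: "\<exists>m\<in>{med V E y x w, med V E y z w}. gdist E y m \<le> gdist E y b \<and> (m \<noteq> w)
     \<and> m \<in> interval V E y w" if bB: "b \<in> B" for b
  proof -
    have bw: "b \<noteq> w" and bi: "b \<in> interval V E y w" using bB assms(6) by auto
    have bV: "b \<in> V" using bi unfolding interval_def by blast
    have pos: "gdist E w b > 0" using cg_zero[OF cg assms(2) bV] bw by fastforce
    show ?thesis
    proof (cases "b \<in> interval V E x w")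
      case True
      from key[OF assms(1) assms(4) assms(3) assms(2) bi True] pos
      have "gdist E y (med V E y x w) \<le> gdist E y b" "med V E y x w \<noteq> w"
        using gdist_self[of E w] by auto
      thus ?thesis using m1 by auto
    next
      case False
      hence "b \<in> interval V E z w" using bB assms(6) by auto
      from key[OF assms(1) assms(4) assms(5) assms(2) bi this] pos
      have "gdist E y (med V E y z w) \<le> gdist E y b" "med V E y z w \<noteq> w"
        using gdist_self[of E w] by auto
      thus ?thesis using m2 by auto
    qed
  qed
  have lb: "\<forall>b\<in>B. gdist E y r \<le> gdist E y b"
  proof
    fix b assume "b \<in> B"
    from gen[OF this] rm show "gdist E y r \<le> gdist E y b" by auto
  qed
  have "r \<noteq> w"
  proof
    assume rw: "r = w"
    obtain b where "b \<in> B" using assms(7) by blast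
    from gen[OF this] obtain m where m: "m \<in> {med V E y x w, med V E y z w}" "m \<noteq> w"
      "m \<in> interval V E y w" by blast
    have mV: "m \<in> V" using m(3) unfolding interval_def by blast
    have "gdist E m w > 0" using cg_zero[OF cg mV assms(2)] m(2) by fastforce
    hence "gdist E y m < gdist E y w" using m(3) unfolding interval_def by auto
    thus False using rm rw m(1) by auto
  qed
  hence "r \<in> B" using r m1 m2 assms(6) by auto
  thus "r \<in> B \<and> (\<forall>b\<in>B. gdist E y r \<le> gdist E y b)" using lb by blast
qed

end
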